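(* Let $W=\mathfrak{S}_n$, $\ast=\mathrm{id}$, and let $w\in I_\ast$. Then any two reduced $I_\ast$-expressions for $w$ can be transformed into each other through a finite series of braid $I_\ast$-transformations (each intermediate sequence being a reduced $I_\ast$-expression for $w$).
   Context: $\mathfrak{S}_n$ is the symmetric group with simple transpositions $s_i=(i,i+1)$, $1\le i<n$, $S=\{s_1,\dots,s_{n-1}\}$; $I_\ast=\{w\in\mathfrak{S}_n:w^2=1\}$. For $s\in S$ and $w\in I_\ast$ set $s\ltimes w=sw$ if $sw=ws$, and $s\ltimes w=sws$ if $sw\neq ws$ (so $s\ltimes 1=s$); iterated: $s_{i_1}\ltimes s_{i_2}\ltimes\cdots\ltimes s_{i_k}\ltimes w=s_{i_1}\ltimes(s_{i_2}\ltimes(\cdots(s_{i_k}\ltimes w)\cdots))$. A sequence $(s_{i_1},\dots,s_{i_k})$ is an $I_\ast$-expression for $w$ if $w=s_{i_1}\ltimes\cdots\ltimes s_{i_k}\ltimes 1$ (the empty sequence being an expression for $1$); it is reduced if $k$ is minimal among all $I_\ast$-expressions of $w$; this minimal $k$ is denoted $\rho(w)$. A braid $I_\ast$-transformation of a reduced $I_\ast$-expression is one of: (i) replacing a consecutive block $(s_j,s_{j+1},s_j)$ by $(s_{j+1},s_j,s_{j+1})$ or vice versa ($1\le j<n-1$); (ii) replacing a consecutive block $(s_b,s_c)$ with $|b-c|>1$ by $(s_c,s_b)$; (iii) replacing the last two entries $(s_k,s_{k+1})$ of the sequence by $(s_{k+1},s_k)$ or vice versa ($1\le k<n-1$); in each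 case both the original and the resulting sequences are required to be reduced. *)

theory Defs
  imports "HOL-Combinatorics.Combinatorics"
begin

(* S_n is realised as the permutations of {1..n} (functions nat => nat permuting {1..n});
   the simple transposition s_i = (i, i+1) is encoded by its index i (1 <= i < n). *)

definition sref :: "nat \<Rightarrow> (nat \<Rightarrow> nat)" where
  "sref i = transpose i (Suc i)"

definition Istar :: "nat \<Rightarrow> (nat \<Rightarrow> nat) set" where
  "Istar n = {w. w permutes {1..n} \<and> w \<circ> w = id}"

definition ltimes :: "nat \<Rightarrow> (nat \<Rightarrow> nat) \<Rightarrow> (nat \<Rightarrow> nat)" where
  "ltimes i w = (if sref i \<circ> w = w \<circ> sref i then sref i \<circ> w else sref i \<circ> w \<circ> sref i)"

definition expr_val :: "nat list \<Rightarrow> (nat \<Rightarrow> nat)" where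
  "expr_val xs = foldr ltimes xs id"

definition is_Iexpr :: "nat \<Rightarrow> nat list \<Rightarrow> (nat \<Rightarrow> nat) \<Rightarrow> bool" where
  "is_Iexpr n xs w \<longleftrightarrow> set xs \<subseteq> {1..<n} \<and> expr_val xs = w"

definition reduced_Iexpr :: "nat \<Rightarrow> nat list \<Rightarrow> (nat \<Rightarrow> nat) \<Rightarrow> bool" where
  "reduced_Iexpr n xs w \<longleftrightarrow> is_Iexpr n xs w \<and> (\<forall>ys. is_Iexpr n ys w \<longrightarrow> length xs \<le> length ys)"

definition braid_step :: "nat \<Rightarrow> nat list \<Rightarrow> nat list \<Rightarrow> bool" where
  "braid_step n xs ys \<longleftrightarrow>
     reduced_Iexpr n xs (expr_val xs) \<and> reduced_Iexpr n ys (expr_val ys) \<and>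
     ((\<exists>a b j. 1 \<le> j \<and> j + 1 < n \<and>
        ((xs = a @ [j, j+1, j] @ b \<and> ys = a @ [j+1, j, j+1] @ b) \<or>
         (xs = a @ [j+1, j, j+1] @ b \<and> ys = a @ [j, j+1, j] @ b)))
    \<or> (\<exists>a c b d. (b > d + 1 \<or> d > b + 1) \<and>
        xs = a @ [b, d] @ c \<and> ys = a @ [d, b] @ c)
    \<or> (\<exists>a k. 1 \<le> k \<and> k + 1 < n \<and>
        ((xs = a @ [k, k+1] \<and> ys = a @ [k+1, k]) \<or>
         (xs = a @ [k+1, k] \<and> ys = a @ [k, k+1]))))"

end

theory Submission imports Defs begin

definition invol :: "(nat \<Rightarrow> nat) \<Rightarrow> bool" where
  "invol w \<longleftrightarrow> (\<forall>k. w (w k) = k)"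

definition Mc :: "nat \<Rightarrow> (nat \<Rightarrow> nat) \<Rightarrow> bool" where
  "Mc i w \<longleftrightarrow> w i = Suc i \<or> (w i = i \<and> w (Suc i) = Suc i)"

lemma sref_apply: "sref i y = (if y = i then Suc i else if y = Suc i then i else y)"
  by (simp add: sref_def transpose_def)

lemma sref_sref[simp]: "sref i (sref i y) = y"
  by (simp add: sref_apply)

lemma sref_comp[simp]: "sref i \<circ> sref i = id"
  by (simp add: fun_eq_iff)

lemma commute_iff:
  assumes "invol w" shows "(sref i \<circ> w = w \<circ> sref i) \<longleftrightarrow> Mc i w"
proof
  assume c: "sref i \<circ> w = w \<circ> sref i"
  have e: "sref i (w i) = w (Suc i)" using fun_cong[OF c, of i] by (simp add: sref_apply)
  show "Mc i w"
  proof (rule ccontr)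
    assume "\<not> Mc i w"
    hence "w i \<noteq> Suc i" "w i \<noteq> i \<or> w (Suc i) \<noteq> Suc i" by (auto simp: Mc_def)
    then show False using e assms unfolding invol_def
      by (metis n_not_Suc_n sref_apply)
  qed
next
  assume m: "Mc i w"
  show "sref i \<circ> w = w \<circ> sref i"
  proof
    fix y
    have i1: "w (w k) = k" for k using assms by (simp add: invol_def)
    show "(sref i \<circ> w) y = (w \<circ> sref i) y"
      using m i1[of y] i1[of i] i1[of "Suc i"] unfolding Mc_def
      by (auto simp: sref_apply)
  qed
qed

lemma lt_M: "invol w \<Longrightarrow> Mc i w \<Longrightarrow> ltimes i w = sref i \<circ> w"
  using commute_iff by (simp add: ltimes_def)
lemma lt_C: "invol w \<Longrightarrow> \<not> Mc i w \<Longrightarrow> ltimes i w = sref i \<circ> w \<circ> sref i"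
  using commute_iff by (simp add: ltimes_def)

lemma lt_apply: "invol w \<Longrightarrow> ltimes i w y = (if Mc i w then sref i (w y) else sref i (w (sref i y)))"
  using lt_M lt_C by auto

lemma lt_lt: "ltimes i (ltimes i u) = u"
proof (cases "sref i \<circ> u = u \<circ> sref i")
  case True
  have "sref i \<circ> (sref i \<circ> u) = (sref i \<circ> u) \<circ> sref i"
    using True by (simp add: fun_eq_iff)
  then show ?thesis using True by (simp add: ltimes_def fun_eq_iff)
next
  case False
  have "sref i \<circ> (sref i \<circ> u \<circ> sref i) \<noteq> (sref i \<circ> u \<circ> sref i) \<circ> sref i"
  proof
    assume "sref i \<circ> (sref i \<circ> u \<circ> sref i) = (sref i \<circ> u \<circ> sref i) \<circ> sref i"
    hence "u \<circ> sref i = sref i \<circ> u" by (simp add: fun_eq_iff)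
    thus False using False by simp
  qed
  then have b: "ltimes i (sref i \<circ> u \<circ> sref i) = sref i \<circ> (sref i \<circ> u \<circ> sref i) \<circ> sref i"
    unfolding ltimes_def by (rule if_not_P)
  have a: "ltimes i u = sref i \<circ> u \<circ> sref i"
    unfolding ltimes_def using False by (rule if_not_P)
  show ?thesis by (simp add: a b fun_eq_iff)
qed


lemma Istar_invol: "w \<in> Istar n \<Longrightarrow> invol w"
  unfolding Istar_def invol_def by (auto simp: fun_eq_iff dest: fun_cong)

lemma Istar_perm: "w \<in> Istar n \<Longrightarrow> w permutes {1..n}"
  unfolding Istar_def by auto

lemma sref_perm: "1 \<le> i \<Longrightarrow> i < n \<Longrightarrow> sref i permutes {1..n}"
  unfolding sref_def by (rule permutes_swap_id) auto

lemma lt_Istar: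
  assumes w: "w \<in> Istar n" and i: "1 \<le> i" "i < n"
  shows "ltimes i w \<in> Istar n"
proof -
  have ww: "w \<circ> w = id" using w by (simp add: Istar_def)
  have pw: "w permutes {1..n}" using w by (simp add: Istar_def)
  have ps: "sref i permutes {1..n}" using sref_perm i by blast
  show ?thesis
  proof (cases "sref i \<circ> w = w \<circ> sref i")
    case True
    have c: "sref i (w y) = w (sref i y)" for y using True by (metis comp_apply)
    have w2: "w (w y) = y" for y using ww by (metis comp_apply id_apply)
    have "(sref i \<circ> w) \<circ> (sref i \<circ> w) = id"
      by (simp add: fun_eq_iff c[symmetric] w2)
    then show ?thesis using True pw ps unfolding ltimes_def Istar_def
      by (auto intro: permutes_compose)
  next
    case False
    have w2: "w (w y) = y" for y using ww by (metis comp_apply id_apply)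
    have "(sref i \<circ> w \<circ> sref i) \<circ> (sref i \<circ> w \<circ> sref i) = id"
      by (simp add: fun_eq_iff w2)
    then show ?thesis using False pw ps unfolding ltimes_def Istar_def
      by (auto intro: permutes_compose)
  qed
qed

lemma id_Istar: "id \<in> Istar n"
  unfolding Istar_def by (simp add: permutes_id)

lemma expr_Istar: "set xs \<subseteq> {1..<n} \<Longrightarrow> expr_val xs \<in> Istar n"
  by (induction xs) (auto simp: expr_val_def id_Istar intro: lt_Istar)

lemma expr_val_Cons[simp]: "expr_val (i # xs) = ltimes i (expr_val xs)"
  by (simp add: expr_val_def)

lemma expr_val_Nil[simp]: "expr_val [] = id"
  by (simp add: expr_val_def)

lemma expr_val_append: "expr_val (a @ xs) = foldr ltimes a (expr_val xs)"
  by (simp add: expr_val_def)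

lemma sref_less:
  "x \<noteq> y \<Longrightarrow> \<not>(x = i \<and> y = Suc i) \<Longrightarrow> \<not>(x = Suc i \<and> y = i) \<Longrightarrow> (sref i y < sref i x \<longleftrightarrow> y < x)"
  by (auto simp: sref_apply)

lemma invol_inj: "invol w \<Longrightarrow> w a = w b \<longleftrightarrow> a = b"
  unfolding invol_def by metis

lemma flip:
  assumes "invol w"
  shows "ltimes i w i < ltimes i w (Suc i) \<longleftrightarrow> w (Suc i) < w i"
proof -
  have i1: "w (w k) = k" for k using assms by (simp add: invol_def)
  have ne: "w i \<noteq> w (Suc i)" using invol_inj[OF assms] by simp
  show ?thesis
  proof (cases "Mc i w")
    case True
    then show ?thesis using i1[of i] i1[of "Suc i"] assms
      by (auto simp: lt_apply sref_apply Mc_def)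
  next
    case False
    then have "\<not>(w i = i \<and> w (Suc i) = Suc i)" "\<not>(w i = Suc i \<and> w (Suc i) = i)"
      by (auto simp: Mc_def)
    then show ?thesis using False assms sref_less[OF ne] by (simp add: lt_apply sref_apply)
  qed
qed

definition Inv :: "nat \<Rightarrow> (nat \<Rightarrow> nat) \<Rightarrow> (nat \<times> nat) set" where
  "Inv n f = {(a,b). a \<in> {1..n} \<and> b \<in> {1..n} \<and> a < b \<and> f b < f a}"

definition Kc :: "nat \<Rightarrow> (nat \<Rightarrow> nat) \<Rightarrow> nat" where
  "Kc n f = card {a \<in> {1..n}. a < f a}"

definition Q :: "nat \<Rightarrow> (nat \<Rightarrow> nat) \<Rightarrow> nat" where
  "Q n f = card (Inv n f) + Kc n f"

lemma finite_Inv: "finite (Inv n f)"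
proof -
  have "Inv n f \<subseteq> {1..n} \<times> {1..n}" by (auto simp: Inv_def)
  thus ?thesis by (rule finite_subset) simp
qed

lemma Inv_left:
  assumes f: "f permutes {1..n}" and i: "1 \<le> i" "i < n"
    and p: "f p = i" and q: "f q = Suc i"
  shows "(p < q \<longrightarrow> card (Inv n (sref i \<circ> f)) = card (Inv n f) + 1) \<and>
         (q < p \<longrightarrow> card (Inv n (sref i \<circ> f)) + 1 = card (Inv n f))"
proof -
  have inj: "inj f" using f by (rule permutes_inj)
  have pe: "f a = i \<longleftrightarrow> a = p" for a using inj p by (metis injD)
  have qe: "f a = Suc i \<longleftrightarrow> a = q" for a using inj q by (metis injD)
  have fe: "f a = f b \<longleftrightarrow> a = b" for a b using inj by (auto dest: injD)
  have pn: "p \<in> {1..n}"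
  proof (rule ccontr)
    assume a: "p \<notin> {1..n}"
    then have "f p = p" by (rule permutes_not_in[OF f])
    then show False using p i a by auto
  qed
  have qn: "q \<in> {1..n}"
  proof (rule ccontr)
    assume a: "q \<notin> {1..n}"
    then have "f q = q" by (rule permutes_not_in[OF f])
    then show False using q i a by auto
  qed
  have key: "sref i (f b) < sref i (f a) \<longleftrightarrow> f b < f a" if "a \<noteq> b" "\<not>(a = p \<and> b = q)" "\<not>(a = q \<and> b = p)" for a b
  proof (rule sref_less)
    show "f a \<noteq> f b" using that(1) fe by simp
    show "\<not>(f a = i \<and> f b = Suc i)" using that(2) pe[of a] qe[of b] by blast
    show "\<not>(f a = Suc i \<and> f b = i)" using that(3) pe[of b] qe[of a] by blast
  qed
  show ?thesis
  proof (intro conjI impI)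
    assume pq: "p < q"
    have "Inv n (sref i \<circ> f) = insert (p,q) (Inv n f)"
    proof (rule set_eqI, clarify)
      fix a b
      show "(a,b) \<in> Inv n (sref i \<circ> f) \<longleftrightarrow> (a,b) \<in> insert (p,q) (Inv n f)"
      proof (cases "a = p \<and> b = q")
        case True
        have "sref i (f q) < sref i (f p)" using p q by (simp add: sref_apply)
        then show ?thesis using True pq pn qn by (simp add: Inv_def)
      next
        case F1: False
        show ?thesis
        proof (cases "a = q \<and> b = p")
          case True then show ?thesis using pq by (auto simp: Inv_def)
        next
          case F2: False
          show ?thesis
          proof (cases "a = b")
            case True then show ?thesis using pq by (auto simp: Inv_def)
          next
            case False
            have iff: "sref i (f b) < sref i (f a) \<longleftrightarrow> f b < f a" using key[OF False F1 F2] .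
            show ?thesis using F1 F2 by (simp add: Inv_def iff) blast
          qed
        qed
      qed
    qed
    moreover have "(p,q) \<notin> Inv n f" using p q by (auto simp: Inv_def)
    ultimately show "card (Inv n (sref i \<circ> f)) = card (Inv n f) + 1"
      by (simp add: finite_Inv)
  next
    assume pq: "q < p"
    have "Inv n (sref i \<circ> f) = Inv n f - {(q,p)}"
    proof (rule set_eqI, clarify)
      fix a b
      show "(a,b) \<in> Inv n (sref i \<circ> f) \<longleftrightarrow> (a,b) \<in> Inv n f - {(q,p)}"
      proof (cases "a = q \<and> b = p")
        case True
        have "\<not> sref i (f p) < sref i (f q)" using p q by (simp add: sref_apply)
        then show ?thesis using True pq pn qn by (simp add: Inv_def)
      next
        case F1: False
        show ?thesis
        proof (cases "a = p \<and> b = q")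
          case True then show ?thesis using pq by (auto simp: Inv_def)
        next
          case F2: False
          show ?thesis
          proof (cases "a = b")
            case True then show ?thesis using pq by (auto simp: Inv_def)
          next
            case False
            have iff: "sref i (f b) < sref i (f a) \<longleftrightarrow> f b < f a" using key[OF False F2 F1] .
            show ?thesis using F1 F2 by (simp add: Inv_def iff)
          qed
        qed
      qed
    qed
    moreover have "(q,p) \<in> Inv n f" using p q pq pn qn by (auto simp: Inv_def)
    then have "card (Inv n f) = Suc (card (Inv n f - {(q,p)}))" by (rule card.remove[OF finite_Inv])
    ultimately show "card (Inv n (sref i \<circ> f)) + 1 = card (Inv n f)"
      by simp
  qed
qed

lemma Inv_inv_le:
  assumes f: "f permutes {1..n}" and fg: "\<And>x. g (f x) = x"
  shows "card (Inv n f) \<le> card (Inv n g)"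
proof -
  have inj: "inj f" using f by (rule permutes_inj)
  have sub: "(\<lambda>(a,b). (f b, f a)) ` Inv n f \<subseteq> Inv n g"
  proof (rule image_subsetI, clarify)
    fix a b assume ab: "(a,b) \<in> Inv n f"
    then have "a \<in> {1..n}" "b \<in> {1..n}" by (auto simp: Inv_def)
    then have "f a \<in> {1..n}" "f b \<in> {1..n}" using permutes_in_image[OF f] by auto
    then show "(f b, f a) \<in> Inv n g" using ab fg by (auto simp: Inv_def)
  qed
  have ij: "inj_on (\<lambda>(a,b). (f b, f a)) (Inv n f)"
    by (auto simp: inj_on_def inj_eq[OF inj])
  show ?thesis by (rule card_inj_on_le[OF ij sub finite_Inv])
qed

lemma Inv_inv_eq:
  assumes "f permutes {1..n}" "g permutes {1..n}" "\<And>x. g (f x) = x" "\<And>x. f (g x) = x"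
  shows "card (Inv n f) = card (Inv n g)"
  using Inv_inv_le[of f n g] Inv_inv_le[of g n f] assms by simp


lemma perm_in: "f permutes {1..n} \<Longrightarrow> f x \<in> {1..n} \<longleftrightarrow> x \<in> {1..n}"
  by (rule permutes_in_image)

lemma Q_up:
  assumes w: "w \<in> Istar n" and i: "1 \<le> i" "i < n" and asc: "w i < w (Suc i)"
  shows "Q n (ltimes i w) = Q n w + 2"
proof -
  have iv: "invol w" using w by (rule Istar_invol)
  have pw: "w permutes {1..n}" using w by (rule Istar_perm)
  have ps: "sref i permutes {1..n}" using i by (rule sref_perm)
  have i1: "w (w k) = k" for k using iv by (simp add: invol_def)
  have ne: "w i \<noteq> w (Suc i)" using asc by simp
  show ?thesis
  proof (cases "Mc i w")
    case True
    have wi: "w i = i" "w (Suc i) = Suc i"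
      using True asc i1[of i] unfolding Mc_def by auto
    have lt: "ltimes i w = sref i \<circ> w" using lt_M[OF iv True] .
    have c1: "card (Inv n (sref i \<circ> w)) = card (Inv n w) + 1"
      using Inv_left[OF pw i wi] by simp
    have oth: "sref i (w a) = w a" if "a \<noteq> i" "a \<noteq> Suc i" for a
    proof -
      have "w a \<noteq> i" using that i1[of a] wi by metis
      moreover have "w a \<noteq> Suc i" using that i1[of a] wi by metis
      ultimately show ?thesis by (simp add: sref_apply)
    qed
    have "{a \<in> {1..n}. a < (sref i \<circ> w) a} = insert i {a \<in> {1..n}. a < w a}"
    proof (rule set_eqI)
      fix a
      show "a \<in> {a \<in> {1..n}. a < (sref i \<circ> w) a} \<longleftrightarrow> a \<in> insert i {a \<in> {1..n}. a < w a}"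
        using i wi oth[of a] by (cases "a = i \<or> a = Suc i") (auto simp: sref_apply)
    qed
    moreover have "i \<notin> {a \<in> {1..n}. a < w a}" using wi by simp
    ultimately have "Kc n (sref i \<circ> w) = Kc n w + 1" by (simp add: Kc_def)
    then show ?thesis using c1 lt by (simp add: Q_def)
  next
    case False
    have nm: "\<not>(w i = i \<and> w (Suc i) = Suc i)" "\<not>(w i = Suc i \<and> w (Suc i) = i)"
      using False by (auto simp: Mc_def)
    have lt: "ltimes i w = sref i \<circ> (w \<circ> sref i)" using lt_C[OF iv False] by (simp add: comp_assoc)
    have pws: "(w \<circ> sref i) permutes {1..n}" using ps pw by (rule permutes_compose)
    have psw: "(sref i \<circ> w) permutes {1..n}" using pw ps by (rule permutes_compose)
    have lessp: "sref i (w i) < sref i (w (Suc i))"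
      using sref_less[OF ne[symmetric], of i] nm asc by auto
    have c1: "card (Inv n (sref i \<circ> (w \<circ> sref i))) = card (Inv n (w \<circ> sref i)) + 1"
      using Inv_left[OF pws i, of "sref i (w i)" "sref i (w (Suc i))"] i1 lessp by simp
    have c2: "card (Inv n (w \<circ> sref i)) = card (Inv n (sref i \<circ> w))"
      by (rule Inv_inv_eq[OF pws psw]) (simp_all add: i1)
    have c3: "card (Inv n (sref i \<circ> w)) = card (Inv n w) + 1"
      using Inv_left[OF pw i, of "w i" "w (Suc i)"] i1 asc by simp
    have hb: "sref i b < sref i (w b) \<longleftrightarrow> b < w b" for b
    proof (cases "w b = b")
      case True then show ?thesis by simp
    next
      case F: False
      have "\<not>(w b = i \<and> b = Suc i)" using nm i1[of i] i1[of "Suc i"] by metis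
      moreover have "\<not>(w b = Suc i \<and> b = i)" using nm i1[of i] i1[of "Suc i"] by metis
      ultimately show ?thesis using sref_less[OF F, of i] by simp
    qed
    have "{a \<in> {1..n}. a < (sref i \<circ> (w \<circ> sref i)) a} = sref i ` {b \<in> {1..n}. b < w b}"
    proof (rule set_eqI)
      fix a
      show "a \<in> {a \<in> {1..n}. a < (sref i \<circ> (w \<circ> sref i)) a} \<longleftrightarrow> a \<in> sref i ` {b \<in> {1..n}. b < w b}"
      proof
        assume a: "a \<in> {a \<in> {1..n}. a < (sref i \<circ> (w \<circ> sref i)) a}"
        have "sref i a \<in> {b \<in> {1..n}. b < w b}"
          using a hb[of "sref i a"] perm_in[OF ps, of a] by auto
        then show "a \<in> sref i ` {b \<in> {1..n}. b < w b}"
          by (rule image_eqI[rotated]) simp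
      next
        assume "a \<in> sref i ` {b \<in> {1..n}. b < w b}"
        then obtain b where b: "b \<in> {1..n}" "b < w b" "a = sref i b" by auto
        then show "a \<in> {a \<in> {1..n}. a < (sref i \<circ> (w \<circ> sref i)) a}"
          using hb[of b] perm_in[OF ps, of b] by auto
      qed
    qed
    moreover have "inj_on (sref i) A" for A
      by (rule inj_on_inverseI[of _ "sref i"]) simp
    ultimately have "Kc n (sref i \<circ> (w \<circ> sref i)) = Kc n w" by (simp add: Kc_def card_image)
    then show ?thesis using c1 c2 c3 lt by (simp add: Q_def)
  qed
qed

lemma Q_down:
  assumes w: "w \<in> Istar n" and i: "1 \<le> i" "i < n" and d: "w (Suc i) < w i"
  shows "Q n w = Q n (ltimes i w) + 2"
proof -
  have u: "ltimes i w \<in> Istar n" using lt_Istar[OF w i] .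
  have "ltimes i w i < ltimes i w (Suc i)" using flip[OF Istar_invol[OF w]] d by simp
  from Q_up[OF u i this] show ?thesis by (simp add: lt_lt)
qed

lemma Q_id: "Q n id = 0"
proof -
  have "Inv n id = {}" by (auto simp: Inv_def)
  then show ?thesis by (simp add: Q_def Kc_def)
qed


lemma incr_lt:
  fixes f :: "nat \<Rightarrow> nat"
  assumes inc: "\<And>d. 1 \<le> d \<Longrightarrow> d < n \<Longrightarrow> f d < f (Suc d)"
  shows "1 \<le> a \<Longrightarrow> a < b \<Longrightarrow> b \<le> n \<Longrightarrow> f a < f b"
proof (induction b)
  case 0 then show ?case by simp
next
  case (Suc b)
  show ?case
  proof (cases "a = b")
    case True then show ?thesis using inc Suc.prems by simp
  next
    case False
    then have "f a < f b" using Suc by simp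
    also have "f b < f (Suc b)" using inc Suc.prems False by simp
    finally show ?thesis .
  qed
qed

lemma perm_desc:
  assumes f: "f permutes {1..n}" and ne: "f \<noteq> id"
  shows "\<exists>d. 1 \<le> d \<and> d < n \<and> f (Suc d) < f d"
proof (rule ccontr)
  assume "\<not> ?thesis"
  then have le: "f d \<le> f (Suc d)" if "1 \<le> d" "d < n" for d using that by (meson not_le)
  have inj: "inj f" using f by (rule permutes_inj)
  have inc: "f d < f (Suc d)" if "1 \<le> d" "d < n" for d
    using le[OF that] inj_eq[OF inj, of d "Suc d"] by (simp add: order_le_less)
  have rng: "1 \<le> f k \<and> f k \<le> n" if "1 \<le> k" "k \<le> n" for k
    using perm_in[OF f, of k] that by simp
  have ge: "k \<le> f k" if "1 \<le> k" "k \<le> n" for k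
    using that
  proof (induction k)
    case 0 then show ?case by simp
  next
    case (Suc k)
    show ?case
    proof (cases "k = 0")
      case True then show ?thesis using rng[of 1] Suc.prems by simp
    next
      case False
      then have "k \<le> f k" using Suc by simp
      moreover have "f k < f (Suc k)" using inc[of k] Suc.prems False by simp
      ultimately show ?thesis by simp
    qed
  qed
  have leq: "\<forall>k. 1 \<le> k \<and> k \<le> n \<and> n - k = m \<longrightarrow> f k \<le> k" for m
  proof (induction m)
    case 0 then show ?case using rng by (metis diff_is_0_eq le_antisym)
  next
    case (Suc m)
    show ?case
    proof (intro allI impI)
      fix k assume k: "1 \<le> k \<and> k \<le> n \<and> n - k = Suc m"
      then have "f (Suc k) \<le> Suc k" using Suc.IH by (metis Suc_diff_Suc diff_Suc_1 le_SucI less_eq_Suc_le not_less_eq_eq zero_less_Suc zero_less_diff le_add1 Suc_le_eq add.commute)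
      moreover have "k < n" using k by arith
      then have "f k < f (Suc k)" using inc[of k] k by simp
      ultimately show "f k \<le> k" by simp
    qed
  qed
  have "f k = k" for k
  proof (cases "k \<in> {1..n}")
    case True then show ?thesis using ge[of k] leq[of "n - k"] by auto
  next
    case False then show ?thesis by (rule permutes_not_in[OF f])
  qed
  then show False using ne by (simp add: fun_eq_iff)
qed

lemma desc_between:
  fixes f :: "nat \<Rightarrow> nat"
  shows "a < b \<Longrightarrow> f b < f a \<Longrightarrow> \<exists>k. a \<le> k \<and> k < b \<and> f (Suc k) < f k"
proof (induction b)
  case 0 then show ?case by simp
next
  case (Suc b)
  show ?case
  proof (cases "f (Suc b) < f b")
    case True then show ?thesis using Suc.prems by (intro exI[of _ b]) simp
  next
    case False
    then have "a < b" "f b < f a" using Suc.prems by (auto simp: less_Suc_eq)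
    then show ?thesis using Suc.IH by (meson less_SucI)
  qed
qed

lemma lower:
  "set xs \<subseteq> {1..<n} \<Longrightarrow> Q n (expr_val xs) \<le> 2 * length xs"
proof (induction xs)
  case Nil then show ?case using Q_id[of n] by (simp add: id_def)
next
  case (Cons i xs)
  have u: "expr_val xs \<in> Istar n" using Cons.prems by (intro expr_Istar) simp
  have i: "1 \<le> i" "i < n" using Cons.prems by auto
  have ih: "Q n (expr_val xs) \<le> 2 * length xs" using Cons by simp
  have ne: "expr_val xs i \<noteq> expr_val xs (Suc i)" using invol_inj[OF Istar_invol[OF u]] by simp
  show ?case
  proof (cases "expr_val xs i < expr_val xs (Suc i)")
    case True then show ?thesis using Q_up[OF u i True] ih by simp
  next
    case False then have "expr_val xs (Suc i) < expr_val xs i" using ne by simp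
    then show ?thesis using Q_down[OF u i] ih by simp
  qed
qed

lemma exists_word:
  "w \<in> Istar n \<Longrightarrow> \<exists>xs. set xs \<subseteq> {1..<n} \<and> expr_val xs = w \<and> 2 * length xs = Q n w"
proof (induction "Q n w" arbitrary: w rule: less_induct)
  case less
  show ?case
  proof (cases "w = id")
    case True
    have "Q n w = 0" by (simp only: True Q_id)
    then show ?thesis using True by (intro exI[of _ "[]"]) simp
  next
    case False
    obtain d where d: "1 \<le> d" "d < n" "w (Suc d) < w d"
      using perm_desc[OF Istar_perm[OF less.prems] False] by blast
    have u: "ltimes d w \<in> Istar n" using lt_Istar[OF less.prems d(1,2)] .
    have q: "Q n w = Q n (ltimes d w) + 2" using Q_down[OF less.prems d] .
    obtain xs where xs: "set xs \<subseteq> {1..<n}" "expr_val xs = ltimes d w" "2 * length xs = Q n (ltimes d w)"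
      using less.hyps[of "ltimes d w"] q u by auto
    show ?thesis using xs d q by (intro exI[of _ "d # xs"]) (simp add: lt_lt)
  qed
qed

lemma red_iff:
  assumes w: "w \<in> Istar n"
  shows "reduced_Iexpr n xs w \<longleftrightarrow> set xs \<subseteq> {1..<n} \<and> expr_val xs = w \<and> 2 * length xs = Q n w"
proof
  assume r: "reduced_Iexpr n xs w"
  obtain ys where ys: "set ys \<subseteq> {1..<n}" "expr_val ys = w" "2 * length ys = Q n w"
    using exists_word[OF w] by blast
  have "length xs \<le> length ys" using r ys by (auto simp: reduced_Iexpr_def is_Iexpr_def)
  moreover have "Q n w \<le> 2 * length xs" using r lower by (auto simp: reduced_Iexpr_def is_Iexpr_def)
  ultimately show "set xs \<subseteq> {1..<n} \<and> expr_val xs = w \<and> 2 * length xs = Q n w"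
    using r ys by (auto simp: reduced_Iexpr_def is_Iexpr_def)
next
  assume h: "set xs \<subseteq> {1..<n} \<and> expr_val xs = w \<and> 2 * length xs = Q n w"
  show "reduced_Iexpr n xs w"
    unfolding reduced_Iexpr_def is_Iexpr_def
  proof (intro conjI allI impI)
    fix ys assume "set ys \<subseteq> {1..<n} \<and> expr_val ys = w"
    then have "Q n w \<le> 2 * length ys" using lower by auto
    then show "length xs \<le> length ys" using h by simp
  qed (use h in auto)
qed

lemma red_Istar: "reduced_Iexpr n xs w \<Longrightarrow> w \<in> Istar n"
  unfolding reduced_Iexpr_def is_Iexpr_def using expr_Istar by blast

lemma exists_red: "w \<in> Istar n \<Longrightarrow> \<exists>c. reduced_Iexpr n c w"
  using exists_word red_iff by blast

lemma red_cons:
  assumes w: "w \<in> Istar n" and i: "1 \<le> i" "i < n" and d: "w (Suc i) < w i"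
    and c: "reduced_Iexpr n c (ltimes i w)"
  shows "reduced_Iexpr n (i # c) w"
proof -
  have u: "ltimes i w \<in> Istar n" using lt_Istar[OF w i] .
  have "set c \<subseteq> {1..<n} \<and> expr_val c = ltimes i w \<and> 2 * length c = Q n (ltimes i w)"
    using c red_iff[OF u] by blast
  then show ?thesis using red_iff[OF w] Q_down[OF w i d] i by (simp add: lt_lt)
qed

lemma red_cons_D:
  assumes r: "reduced_Iexpr n (i # c) w"
  shows "w \<in> Istar n \<and> 1 \<le> i \<and> i < n \<and> w (Suc i) < w i \<and> reduced_Iexpr n c (ltimes i w)"
proof -
  have w: "w \<in> Istar n" using red_Istar[OF r] .
  have h: "set (i#c) \<subseteq> {1..<n}" "expr_val (i#c) = w" "2 * length (i#c) = Q n w"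
    using r red_iff[OF w] by blast+
  have i: "1 \<le> i" "i < n" using h by auto
  define u where "u = expr_val c"
  have u: "u \<in> Istar n" unfolding u_def using h by (intro expr_Istar) simp
  have wu: "w = ltimes i u" using h u_def by simp
  have lo: "Q n u \<le> 2 * length c" unfolding u_def using h lower by simp
  have ne: "u i \<noteq> u (Suc i)" using invol_inj[OF Istar_invol[OF u]] by simp
  have asc: "u i < u (Suc i)"
  proof (rule ccontr)
    assume "\<not> u i < u (Suc i)"
    then have "u (Suc i) < u i" using ne by simp
    from Q_down[OF u i this] have "Q n u = Q n w + 2" using wu by simp
    then show False using lo h by simp
  qed
  have q: "Q n w = Q n u + 2" using Q_up[OF u i asc] wu by simp
  have ne2: "w i \<noteq> w (Suc i)" using invol_inj[OF Istar_invol[OF w]] by simp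
  have dw: "w (Suc i) < w i" using flip[OF Istar_invol[OF u], of i] asc wu ne2 by simp
  have "reduced_Iexpr n c u" using red_iff[OF u] h q u_def by simp
  then show ?thesis using w i dw wu by (simp add: lt_lt)
qed


definition conn :: "nat \<Rightarrow> (nat \<Rightarrow> nat) \<Rightarrow> nat list \<Rightarrow> nat list \<Rightarrow> bool" where
  "conn n w = (\<lambda>u v. braid_step n u v \<and> reduced_Iexpr n u w \<and> reduced_Iexpr n v w)\<^sup>*\<^sup>*"

lemma braid_sym: "braid_step n u v \<Longrightarrow> braid_step n v u"
  unfolding braid_step_def by blast

lemma conn_refl: "conn n w xs xs"
  by (simp add: conn_def)

lemma conn_step: "braid_step n u v \<Longrightarrow> reduced_Iexpr n u w \<Longrightarrow> reduced_Iexpr n v w \<Longrightarrow> conn n w u v"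
  unfolding conn_def by (rule r_into_rtranclp) simp

lemma conn_trans: "conn n w xs ys \<Longrightarrow> conn n w ys zs \<Longrightarrow> conn n w xs zs"
  unfolding conn_def by (rule rtranclp_trans)

lemma conn_sym: "conn n w xs ys \<Longrightarrow> conn n w ys xs"
  unfolding conn_def
proof (induction rule: rtranclp_induct)
  case base then show ?case by simp
next
  case (step u v)
  have "(\<lambda>u v. braid_step n u v \<and> reduced_Iexpr n u w \<and> reduced_Iexpr n v w) v u"
    using step(2) braid_sym by blast
  then show ?case using step(3) by (rule converse_rtranclp_into_rtranclp)
qed

lemma conn_goal: "conn n w xs ys \<Longrightarrow> (\<lambda>u v. braid_step n u v \<and> reduced_Iexpr n v w)\<^sup>*\<^sup>* xs ys"
  unfolding conn_def
proof (induction rule: rtranclp_induct)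
  case base then show ?case by simp
next
  case (step u v) then show ?case by (simp add: rtranclp.rtrancl_into_rtrancl)
qed

lemma red_len: "reduced_Iexpr n xs w \<Longrightarrow> reduced_Iexpr n ys w \<Longrightarrow> length xs = length ys"
  unfolding reduced_Iexpr_def by (meson le_antisym)

lemma red_app:
  assumes "reduced_Iexpr n xs w'" "reduced_Iexpr n u w'" "reduced_Iexpr n (a @ xs) w"
  shows "reduced_Iexpr n (a @ u) w"
proof -
  have l: "length u = length xs" using red_len assms(1,2) by metis
  have "expr_val (a @ u) = w" using assms
    by (simp add: reduced_Iexpr_def is_Iexpr_def expr_val_append)
  moreover have "set (a @ u) \<subseteq> {1..<n}" using assms by (auto simp: reduced_Iexpr_def is_Iexpr_def)
  ultimately show ?thesis using assms(3) l unfolding reduced_Iexpr_def is_Iexpr_def by simp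
qed

lemma braid_prefix:
  assumes "braid_step n u v" "reduced_Iexpr n (a @ u) (expr_val (a @ u))"
    "reduced_Iexpr n (a @ v) (expr_val (a @ v))"
  shows "braid_step n (a @ u) (a @ v)"
proof -
  from assms(1) have
    "(\<exists>a b j. 1 \<le> j \<and> j + 1 < n \<and>
        ((u = a @ [j, j+1, j] @ b \<and> v = a @ [j+1, j, j+1] @ b) \<or>
         (u = a @ [j+1, j, j+1] @ b \<and> v = a @ [j, j+1, j] @ b)))
    \<or> (\<exists>a c b d. (b > d + 1 \<or> d > b + 1) \<and>
        u = a @ [b, d] @ c \<and> v = a @ [d, b] @ c)
    \<or> (\<exists>a k. 1 \<le> k \<and> k + 1 < n \<and>
        ((u = a @ [k, k+1] \<and> v = a @ [k+1, k]) \<or>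
         (u = a @ [k+1, k] \<and> v = a @ [k, k+1])))"
    unfolding braid_step_def by blast
  then have
    "(\<exists>a' b j. 1 \<le> j \<and> j + 1 < n \<and>
        ((a @ u = a' @ [j, j+1, j] @ b \<and> a @ v = a' @ [j+1, j, j+1] @ b) \<or>
         (a @ u = a' @ [j+1, j, j+1] @ b \<and> a @ v = a' @ [j, j+1, j] @ b)))
    \<or> (\<exists>a' c b d. (b > d + 1 \<or> d > b + 1) \<and>
        a @ u = a' @ [b, d] @ c \<and> a @ v = a' @ [d, b] @ c)
    \<or> (\<exists>a' k. 1 \<le> k \<and> k + 1 < n \<and>
        ((a @ u = a' @ [k, k+1] \<and> a @ v = a' @ [k+1, k]) \<or>
         (a @ u = a' @ [k+1, k] \<and> a @ v = a' @ [k, k+1])))"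
    proof (elim disjE)
      assume "\<exists>a b j. 1 \<le> j \<and> j + 1 < n \<and>
        ((u = a @ [j, j+1, j] @ b \<and> v = a @ [j+1, j, j+1] @ b) \<or>
         (u = a @ [j+1, j, j+1] @ b \<and> v = a @ [j, j+1, j] @ b))"
      then obtain a' b j where h: "1 \<le> j" "j + 1 < n"
        "(u = a' @ [j, j+1, j] @ b \<and> v = a' @ [j+1, j, j+1] @ b) \<or>
         (u = a' @ [j+1, j, j+1] @ b \<and> v = a' @ [j, j+1, j] @ b)" by blast
      show ?thesis using h by (intro disjI1 exI[of _ "a @ a'"] exI[of _ b] exI[of _ j]) auto
    next
      assume "\<exists>a c b d. (b > d + 1 \<or> d > b + 1) \<and> u = a @ [b, d] @ c \<and> v = a @ [d, b] @ c"
      then obtain a' c b d where h: "b > d + 1 \<or> d > b + 1" "u = a' @ [b, d] @ c" "v = a' @ [d, b] @ c" by blast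
      show ?thesis using h by (intro disjI2 disjI1 exI[of _ "a @ a'"] exI[of _ c] exI[of _ b] exI[of _ d]) auto
    next
      assume "\<exists>a k. 1 \<le> k \<and> k + 1 < n \<and>
        ((u = a @ [k, k+1] \<and> v = a @ [k+1, k]) \<or>
         (u = a @ [k+1, k] \<and> v = a @ [k, k+1]))"
      then obtain a' k where h: "1 \<le> k" "k + 1 < n"
        "(u = a' @ [k, k+1] \<and> v = a' @ [k+1, k]) \<or> (u = a' @ [k+1, k] \<and> v = a' @ [k, k+1])" by blast
      show ?thesis using h by (intro disjI2 disjI2 exI[of _ "a @ a'"] exI[of _ k]) auto
    qed
  then show ?thesis using assms(2,3) unfolding braid_step_def by blast
qed

lemma conn_prefix:
  assumes c: "conn n w' xs ys" and rx: "reduced_Iexpr n xs w'" and ra: "reduced_Iexpr n (a @ xs) w"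
  shows "conn n w (a @ xs) (a @ ys)"
  using c unfolding conn_def
proof (induction rule: rtranclp_induct)
  case base then show ?case by simp
next
  case (step u v)
  have ru: "reduced_Iexpr n (a @ u) w" using red_app[OF rx _ ra] step(2) by blast
  have rv: "reduced_Iexpr n (a @ v) w" using red_app[OF rx _ ra] step(2) by blast
  have ev: "expr_val (a @ u) = w" "expr_val (a @ v) = w" using ru rv
    by (auto simp: reduced_Iexpr_def is_Iexpr_def)
  have "braid_step n (a @ u) (a @ v)" using braid_prefix[of n u v a] step(2) ru rv ev by simp
  then have "(\<lambda>u v. braid_step n u v \<and> reduced_Iexpr n u w \<and> reduced_Iexpr n v w) (a @ u) (a @ v)"
    using ru rv by simp
  with step(3) show ?case by (rule rtranclp.rtrancl_into_rtrancl)
qed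

definition linked :: "nat \<Rightarrow> (nat \<Rightarrow> nat) \<Rightarrow> nat \<Rightarrow> nat \<Rightarrow> bool" where
  "linked n w i j \<longleftrightarrow> (\<exists>p q. reduced_Iexpr n (i # p) w \<and> reduced_Iexpr n (j # q) w \<and> conn n w (i # p) (j # q))"

definition SFw :: "nat \<Rightarrow> (nat \<Rightarrow> nat) \<Rightarrow> bool" where
  "SFw n w \<longleftrightarrow> (\<forall>i p p'. reduced_Iexpr n (i # p) w \<longrightarrow> reduced_Iexpr n (i # p') w \<longrightarrow> conn n w (i # p) (i # p'))"

lemma link_sym: "linked n w i j \<Longrightarrow> linked n w j i"
  unfolding linked_def using conn_sym by blast

lemma link_trans: "SFw n w \<Longrightarrow> linked n w i j \<Longrightarrow> linked n w j k \<Longrightarrow> linked n w i k"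
  unfolding linked_def SFw_def by (meson conn_trans)

lemma link_refl:
  assumes "w \<in> Istar n" "1 \<le> i" "i < n" "w (Suc i) < w i"
  shows "linked n w i i"
proof -
  obtain c where "reduced_Iexpr n c (ltimes i w)" using exists_red lt_Istar assms by blast
  then have "reduced_Iexpr n (i # c) w" using red_cons assms by blast
  then show ?thesis unfolding linked_def using conn_refl by blast
qed


lemma sref_comm: "Suc i < j \<Longrightarrow> sref j (sref i z) = sref i (sref j z)"
  by (simp add: sref_apply)

lemma sref_fix_eq: "k \<noteq> j \<Longrightarrow> k \<noteq> Suc j \<Longrightarrow> (sref j x = k \<longleftrightarrow> x = k)"
  by (auto simp: sref_apply)

lemma sref_fix: "k \<noteq> j \<Longrightarrow> k \<noteq> Suc j \<Longrightarrow> sref j k = k"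
  by (auto simp: sref_apply)

lemma Mc_far:
  assumes iv: "invol u" and ij: "Suc i < j \<or> Suc j < i"
  shows "Mc i (ltimes j u) \<longleftrightarrow> Mc i u"
proof -
  have a: "ltimes j u i = sref j (u i)" "ltimes j u (Suc i) = sref j (u (Suc i))"
    using ij by (auto simp: lt_apply[OF iv] sref_fix)
  have b: "sref j x = i \<longleftrightarrow> x = i" "sref j x = Suc i \<longleftrightarrow> x = Suc i" for x
    using ij sref_fix_eq[of i j x] sref_fix_eq[of "Suc i" j x] by auto
  show ?thesis unfolding Mc_def a b ..
qed

lemma lt_far:
  assumes u: "u \<in> Istar n" and i: "1 \<le> i" "Suc i < j" "j < n"
  shows "ltimes i (ltimes j u) = ltimes j (ltimes i u)"
proof
  fix y
  have iv: "invol u" using Istar_invol[OF u] .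
  have ivj: "invol (ltimes j u)" using Istar_invol[OF lt_Istar[OF u]] i by simp
  have ivi: "invol (ltimes i u)" using Istar_invol[OF lt_Istar[OF u]] i by simp
  have m1: "Mc i (ltimes j u) \<longleftrightarrow> Mc i u" using Mc_far[OF iv] i by simp
  have m2: "Mc j (ltimes i u) \<longleftrightarrow> Mc j u" using Mc_far[OF iv] i by simp
  show "ltimes i (ltimes j u) y = ltimes j (ltimes i u) y"
    using i by (simp add: lt_apply[OF ivj] lt_apply[OF ivi] lt_apply[OF iv] m1 m2 sref_comm)
qed

lemma far_link:
  assumes w: "w \<in> Istar n" and i: "1 \<le> i" "Suc i < j" "j < n"
    and di: "w (Suc i) < w i" and dj: "w (Suc j) < w j"
    and nn: "\<not> (w j = Suc i \<and> w (Suc j) = i)"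
  shows "linked n w i j"
proof -
  have iv: "invol w" using Istar_invol[OF w] .
  have i': "1 \<le> i" "i < n" "1 \<le> j" using i by auto
  define u1 where "u1 = ltimes i w"
  have u1: "u1 \<in> Istar n" unfolding u1_def using lt_Istar[OF w i'(1,2)] .
  have "u1 j = sref i (w j)" "u1 (Suc j) = sref i (w (Suc j))"
    unfolding u1_def using i by (auto simp: lt_apply[OF iv] sref_fix)
  moreover have "sref i (w (Suc j)) < sref i (w j)"
  proof (subst sref_less)
    show "w j \<noteq> w (Suc j)" using dj by simp
    show "\<not> (w j = i \<and> w (Suc j) = Suc i)" using dj by auto
    show "\<not> (w j = Suc i \<and> w (Suc j) = i)" using nn .
  qed (use dj in simp)
  ultimately have d1: "u1 (Suc j) < u1 j" by simp
  define v where "v = ltimes j u1"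
  have v: "v \<in> Istar n" unfolding v_def using lt_Istar[OF u1 i'(3) i(3)] .
  obtain c where c: "reduced_Iexpr n c v" using exists_red[OF v] by blast
  have r1: "reduced_Iexpr n (j # c) u1" unfolding v_def using red_cons[OF u1 i'(3) i(3) d1] c v_def by simp
  have r2: "reduced_Iexpr n (i # j # c) w" using red_cons[OF w i'(1,2) di] r1 u1_def by simp
  have e2: "expr_val (j # i # c) = w"
  proof -
    have ec: "expr_val c = v" using c by (simp add: reduced_Iexpr_def is_Iexpr_def)
    have "ltimes j (ltimes i v) = ltimes i (ltimes j v)" using lt_far[OF v i] by simp
    also have "\<dots> = w" unfolding v_def u1_def by (simp add: lt_lt)
    finally show ?thesis using ec by simp
  qed
  have r2': "reduced_Iexpr n (j # i # c) w"
    using r2 e2 red_iff[OF w] i' by auto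
  have B: "\<exists>a c' b d. (b > d + 1 \<or> d > b + 1) \<and> i # j # c = a @ [b, d] @ c' \<and> j # i # c = a @ [d, b] @ c'"
    using i by (intro exI[of _ "[]"] exI[of _ c] exI[of _ i] exI[of _ j]) auto
  have "braid_step n (i # j # c) (j # i # c)"
    unfolding braid_step_def using B r2 r2' e2 red_iff[OF w] by auto
  then have "conn n w (i # j # c) (j # i # c)" using conn_step r2 r2' by blast
  then show ?thesis unfolding linked_def using r2 r2' by blast
qed


lemma braid_link_gen:
  assumes w: "w \<in> Istar n" and x: "1 \<le> x" "Suc x < n"
    and d0: "w (Suc x) < w x" and e0: "w (Suc (Suc x)) < w (Suc x)"
    and d1: "ltimes x w (Suc (Suc x)) < ltimes x w (Suc x)"
    and d2: "ltimes (Suc x) (ltimes x w) (Suc x) < ltimes (Suc x) (ltimes x w) x"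
    and d3: "ltimes (Suc x) w (Suc x) < ltimes (Suc x) w x"
    and d4: "ltimes x (ltimes (Suc x) w) (Suc (Suc x)) < ltimes x (ltimes (Suc x) w) (Suc x)"
    and eq: "ltimes x (ltimes (Suc x) (ltimes x w)) = ltimes (Suc x) (ltimes x (ltimes (Suc x) w))"
  shows "linked n w x (Suc x)"
proof -
  have x': "x < n" "1 \<le> Suc x" using x by auto
  define u1 where "u1 = ltimes x w"
  define u2 where "u2 = ltimes (Suc x) u1"
  define t1 where "t1 = ltimes (Suc x) w"
  define t2 where "t2 = ltimes x t1"
  define v where "v = ltimes x u2"
  have u1: "u1 \<in> Istar n" unfolding u1_def using lt_Istar[OF w x(1) x'(1)] .
  have u2: "u2 \<in> Istar n" unfolding u2_def using lt_Istar[OF u1 x'(2) x(2)] .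
  have t1: "t1 \<in> Istar n" unfolding t1_def using lt_Istar[OF w x'(2) x(2)] .
  have t2: "t2 \<in> Istar n" unfolding t2_def using lt_Istar[OF t1 x(1) x'(1)] .
  have v: "v \<in> Istar n" unfolding v_def using lt_Istar[OF u2 x(1) x'(1)] .
  obtain c where c: "reduced_Iexpr n c v" using exists_red[OF v] by blast
  have "reduced_Iexpr n (x # c) u2" using red_cons[OF u2 x(1) x'(1)] d2 c unfolding v_def u2_def u1_def by simp
  then have "reduced_Iexpr n (Suc x # x # c) u1" using red_cons[OF u1 x'(2) x(2)] d1 unfolding u2_def u1_def by simp
  then have r1: "reduced_Iexpr n (x # Suc x # x # c) w" using red_cons[OF w x(1) x'(1)] d0 unfolding u1_def by simp
  have cv: "reduced_Iexpr n c (ltimes (Suc x) t2)" using c eq unfolding v_def u2_def u1_def t2_def t1_def by simp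
  have "reduced_Iexpr n (Suc x # c) t2" using red_cons[OF t2 x'(2) x(2)] d4 cv unfolding t2_def t1_def by simp
  then have "reduced_Iexpr n (x # Suc x # c) t1" using red_cons[OF t1 x(1) x'(1)] d3 unfolding t2_def t1_def by simp
  then have r2: "reduced_Iexpr n (Suc x # x # Suc x # c) w" using red_cons[OF w x'(2) x(2)] e0 unfolding t1_def by simp
  have e1: "expr_val (x # Suc x # x # c) = w" "expr_val (Suc x # x # Suc x # c) = w"
    using r1 r2 by (auto simp: reduced_Iexpr_def is_Iexpr_def)
  have A: "\<exists>a b j. 1 \<le> j \<and> j + 1 < n \<and>
        ((x # Suc x # x # c = a @ [j, j+1, j] @ b \<and> Suc x # x # Suc x # c = a @ [j+1, j, j+1] @ b) \<or>
         (x # Suc x # x # c = a @ [j+1, j, j+1] @ b \<and> Suc x # x # Suc x # c = a @ [j, j+1, j] @ b))"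
    using x by (intro exI[of _ "[]"] exI[of _ c] exI[of _ x]) auto
  have "braid_step n (x # Suc x # x # c) (Suc x # x # Suc x # c)"
    unfolding braid_step_def using A r1 r2 e1 by auto
  then have "conn n w (x # Suc x # x # c) (Suc x # x # Suc x # c)" using conn_step r1 r2 by blast
  then show ?thesis unfolding linked_def using r1 r2 by blast
qed

lemma braid_pt: "sref x (sref (Suc x) (sref x z)) = sref (Suc x) (sref x (sref (Suc x) z))"
  by (simp add: sref_apply)

lemma involD: "invol w \<Longrightarrow> w (w k) = k"
  by (simp add: invol_def)

lemma braid_MCC:
  assumes w: "w \<in> Istar n" and x: "1 \<le> x" "Suc x < n"
    and a: "w x = Suc x" and c0: "w (Suc (Suc x)) < x"
  shows "linked n w x (Suc x)"
proof -
  have iv: "invol w" using Istar_invol[OF w] .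
  have b: "w (Suc x) = x" using involD[OF iv, of x] a by simp
  have x': "x < n" "1 \<le> Suc x" using x by auto
  have Mw: "Mc x w" using a by (simp add: Mc_def)
  have L1: "ltimes x w = sref x \<circ> w" using lt_M[OF iv Mw] .
  have nMt: "\<not> Mc (Suc x) w" using b by (simp add: Mc_def)
  have T1: "ltimes (Suc x) w = sref (Suc x) \<circ> w \<circ> sref (Suc x)" using lt_C[OF iv nMt] .
  have iv1: "invol (ltimes x w)" using Istar_invol[OF lt_Istar[OF w x(1) x'(1)]] .
  have ivt1: "invol (ltimes (Suc x) w)" using Istar_invol[OF lt_Istar[OF w x'(2) x(2)]] .
  have nM2: "\<not> Mc (Suc x) (ltimes x w)" using c0 b by (simp add: L1 Mc_def sref_apply)
  have L2: "ltimes (Suc x) (ltimes x w) = sref (Suc x) \<circ> (sref x \<circ> w) \<circ> sref (Suc x)"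
    using lt_C[OF iv1 nM2] L1 by simp
  have iv2: "invol (ltimes (Suc x) (ltimes x w))"
    using Istar_invol[OF lt_Istar[OF lt_Istar[OF w x(1) x'(1)] x'(2) x(2)]] .
  have nM3: "\<not> Mc x (ltimes (Suc x) (ltimes x w))" using c0 b a by (simp add: L2 Mc_def sref_apply)
  have L3: "ltimes x (ltimes (Suc x) (ltimes x w)) = sref x \<circ> (sref (Suc x) \<circ> (sref x \<circ> w) \<circ> sref (Suc x)) \<circ> sref x"
    using lt_C[OF iv2 nM3] L2 by simp
  have nMt2: "\<not> Mc x (ltimes (Suc x) w)" using a by (simp add: T1 Mc_def sref_apply)
  have T2: "ltimes x (ltimes (Suc x) w) = sref x \<circ> (sref (Suc x) \<circ> w \<circ> sref (Suc x)) \<circ> sref x"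
    using lt_C[OF ivt1 nMt2] T1 by simp
  have ivt2: "invol (ltimes x (ltimes (Suc x) w))"
    using Istar_invol[OF lt_Istar[OF lt_Istar[OF w x'(2) x(2)] x(1) x'(1)]] .
  have Mt3: "Mc (Suc x) (ltimes x (ltimes (Suc x) w))" using a b by (simp add: T2 Mc_def sref_apply)
  have T3: "ltimes (Suc x) (ltimes x (ltimes (Suc x) w)) = sref (Suc x) \<circ> (sref x \<circ> (sref (Suc x) \<circ> w \<circ> sref (Suc x)) \<circ> sref x)"
    using lt_M[OF ivt2 Mt3] T2 by simp
  show ?thesis
  proof (rule braid_link_gen[OF w x])
    show "w (Suc x) < w x" using a b by simp
    show "w (Suc (Suc x)) < w (Suc x)" using b c0 by simp
    show "ltimes x w (Suc (Suc x)) < ltimes x w (Suc x)" using b c0 by (simp add: L1 sref_apply)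
    show "ltimes (Suc x) (ltimes x w) (Suc x) < ltimes (Suc x) (ltimes x w) x" using a c0 by (simp add: L2 sref_apply)
    show "ltimes (Suc x) w (Suc x) < ltimes (Suc x) w x" using a c0 by (simp add: T1 sref_apply)
    show "ltimes x (ltimes (Suc x) w) (Suc (Suc x)) < ltimes x (ltimes (Suc x) w) (Suc x)" using a b by (simp add: T2 sref_apply)
    show "ltimes x (ltimes (Suc x) (ltimes x w)) = ltimes (Suc x) (ltimes x (ltimes (Suc x) w))"
      by (simp add: L3 T3 fun_eq_iff braid_pt)
  qed
qed


lemma braid_CCM:
  assumes w: "w \<in> Istar n" and x: "1 \<le> x" "Suc x < n"
    and b: "w (Suc x) = Suc (Suc x)" and a: "Suc (Suc x) < w x"
  shows "linked n w x (Suc x)"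
proof -
  have iv: "invol w" using Istar_invol[OF w] .
  have c: "w (Suc (Suc x)) = Suc x" using involD[OF iv, of "Suc x"] b by simp
  have x': "x < n" "1 \<le> Suc x" using x by auto
  have nMw: "\<not> Mc x w" using a by (simp add: Mc_def)
  have L1: "ltimes x w = sref x \<circ> w \<circ> sref x" using lt_C[OF iv nMw] .
  have Mt: "Mc (Suc x) w" using b by (simp add: Mc_def)
  have T1: "ltimes (Suc x) w = sref (Suc x) \<circ> w" using lt_M[OF iv Mt] .
  have iv1: "invol (ltimes x w)" using Istar_invol[OF lt_Istar[OF w x(1) x'(1)]] .
  have ivt1: "invol (ltimes (Suc x) w)" using Istar_invol[OF lt_Istar[OF w x'(2) x(2)]] .
  have nM2: "\<not> Mc (Suc x) (ltimes x w)" using a b c by (simp add: L1 Mc_def sref_apply)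
  have L2: "ltimes (Suc x) (ltimes x w) = sref (Suc x) \<circ> (sref x \<circ> w \<circ> sref x) \<circ> sref (Suc x)"
    using lt_C[OF iv1 nM2] L1 by simp
  have iv2: "invol (ltimes (Suc x) (ltimes x w))"
    using Istar_invol[OF lt_Istar[OF lt_Istar[OF w x(1) x'(1)] x'(2) x(2)]] .
  have M3: "Mc x (ltimes (Suc x) (ltimes x w))" using a b c by (simp add: L2 Mc_def sref_apply)
  have L3: "ltimes x (ltimes (Suc x) (ltimes x w)) = sref x \<circ> (sref (Suc x) \<circ> (sref x \<circ> w \<circ> sref x) \<circ> sref (Suc x))"
    using lt_M[OF iv2 M3] L2 by simp
  have nMt2: "\<not> Mc x (ltimes (Suc x) w)" using a b c by (simp add: T1 Mc_def sref_apply)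
  have T2: "ltimes x (ltimes (Suc x) w) = sref x \<circ> (sref (Suc x) \<circ> w) \<circ> sref x"
    using lt_C[OF ivt1 nMt2] T1 by simp
  have ivt2: "invol (ltimes x (ltimes (Suc x) w))"
    using Istar_invol[OF lt_Istar[OF lt_Istar[OF w x'(2) x(2)] x(1) x'(1)]] .
  have nMt3: "\<not> Mc (Suc x) (ltimes x (ltimes (Suc x) w))" using a b c by (simp add: T2 Mc_def sref_apply)
  have T3: "ltimes (Suc x) (ltimes x (ltimes (Suc x) w)) = sref (Suc x) \<circ> (sref x \<circ> (sref (Suc x) \<circ> w) \<circ> sref x) \<circ> sref (Suc x)"
    using lt_C[OF ivt2 nMt3] T2 by simp
  show ?thesis
  proof (rule braid_link_gen[OF w x])
    show "w (Suc x) < w x" using a b by simp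
    show "w (Suc (Suc x)) < w (Suc x)" using b c by simp
    show "ltimes x w (Suc (Suc x)) < ltimes x w (Suc x)" using a b c by (simp add: L1 sref_apply)
    show "ltimes (Suc x) (ltimes x w) (Suc x) < ltimes (Suc x) (ltimes x w) x" using a b c by (simp add: L2 sref_apply)
    show "ltimes (Suc x) w (Suc x) < ltimes (Suc x) w x" using a b c by (simp add: T1 sref_apply)
    show "ltimes x (ltimes (Suc x) w) (Suc (Suc x)) < ltimes x (ltimes (Suc x) w) (Suc x)" using a b c by (simp add: T2 sref_apply)
    show "ltimes x (ltimes (Suc x) (ltimes x w)) = ltimes (Suc x) (ltimes x (ltimes (Suc x) w))"
      by (simp add: L3 T3 fun_eq_iff braid_pt)
  qed
qed

lemma braid_CCC:
  assumes w: "w \<in> Istar n" and x: "1 \<le> x" "Suc x < n"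
    and d0: "w (Suc x) < w x" and e0: "w (Suc (Suc x)) < w (Suc x)"
    and na1: "w x \<noteq> Suc x" and na2: "w x \<noteq> Suc (Suc x)" and nb: "w (Suc x) \<noteq> Suc (Suc x)"
  shows "linked n w x (Suc x)"
proof -
  have iv: "invol w" using Istar_invol[OF w] .
  have nc1: "w (Suc (Suc x)) \<noteq> x" using involD[OF iv, of "Suc (Suc x)"] na2 by auto
  have nc2: "w (Suc (Suc x)) \<noteq> Suc x" using involD[OF iv, of "Suc (Suc x)"] nb by auto
  have nb2: "w (Suc x) \<noteq> x" using involD[OF iv, of "Suc x"] na1 by auto
  have x': "x < n" "1 \<le> Suc x" using x by auto
  have nMw: "\<not> Mc x w" using na1 d0 by (auto simp: Mc_def)
  have L1: "ltimes x w = sref x \<circ> w \<circ> sref x" using lt_C[OF iv nMw] .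
  have nMt: "\<not> Mc (Suc x) w" using nb e0 by (auto simp: Mc_def)
  have T1: "ltimes (Suc x) w = sref (Suc x) \<circ> w \<circ> sref (Suc x)" using lt_C[OF iv nMt] .
  have iv1: "invol (ltimes x w)" using Istar_invol[OF lt_Istar[OF w x(1) x'(1)]] .
  have ivt1: "invol (ltimes (Suc x) w)" using Istar_invol[OF lt_Istar[OF w x'(2) x(2)]] .
  have nM2: "\<not> Mc (Suc x) (ltimes x w)" using d0 e0 na1 na2 nb nc1 nc2 nb2 by (simp add: L1 Mc_def sref_apply)
  have L2: "ltimes (Suc x) (ltimes x w) = sref (Suc x) \<circ> (sref x \<circ> w \<circ> sref x) \<circ> sref (Suc x)"
    using lt_C[OF iv1 nM2] L1 by simp
  have iv2: "invol (ltimes (Suc x) (ltimes x w))"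
    using Istar_invol[OF lt_Istar[OF lt_Istar[OF w x(1) x'(1)] x'(2) x(2)]] .
  have nM3: "\<not> Mc x (ltimes (Suc x) (ltimes x w))" using d0 e0 na1 na2 nb nc1 nc2 nb2 by (simp add: L2 Mc_def sref_apply)
  have L3: "ltimes x (ltimes (Suc x) (ltimes x w)) = sref x \<circ> (sref (Suc x) \<circ> (sref x \<circ> w \<circ> sref x) \<circ> sref (Suc x)) \<circ> sref x"
    using lt_C[OF iv2 nM3] L2 by simp
  have nMt2: "\<not> Mc x (ltimes (Suc x) w)" using d0 e0 na1 na2 nb nc1 nc2 nb2 by (simp add: T1 Mc_def sref_apply)
  have T2: "ltimes x (ltimes (Suc x) w) = sref x \<circ> (sref (Suc x) \<circ> w \<circ> sref (Suc x)) \<circ> sref x"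
    using lt_C[OF ivt1 nMt2] T1 by simp
  have ivt2: "invol (ltimes x (ltimes (Suc x) w))"
    using Istar_invol[OF lt_Istar[OF lt_Istar[OF w x'(2) x(2)] x(1) x'(1)]] .
  have nMt3: "\<not> Mc (Suc x) (ltimes x (ltimes (Suc x) w))" using d0 e0 na1 na2 nb nc1 nc2 nb2 by (simp add: T2 Mc_def sref_apply)
  have T3: "ltimes (Suc x) (ltimes x (ltimes (Suc x) w)) = sref (Suc x) \<circ> (sref x \<circ> (sref (Suc x) \<circ> w \<circ> sref (Suc x)) \<circ> sref x) \<circ> sref (Suc x)"
    using lt_C[OF ivt2 nMt3] T2 by simp
  show ?thesis
  proof (rule braid_link_gen[OF w x d0 e0])
    show "ltimes x w (Suc (Suc x)) < ltimes x w (Suc x)" using d0 e0 na1 na2 nb nc1 nc2 nb2 by (simp add: L1 sref_apply)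
    show "ltimes (Suc x) (ltimes x w) (Suc x) < ltimes (Suc x) (ltimes x w) x" using d0 e0 na1 na2 nb nc1 nc2 nb2 by (simp add: L2 sref_apply)
    show "ltimes (Suc x) w (Suc x) < ltimes (Suc x) w x" using d0 e0 na1 na2 nb nc1 nc2 nb2 by (simp add: T1 sref_apply)
    show "ltimes x (ltimes (Suc x) w) (Suc (Suc x)) < ltimes x (ltimes (Suc x) w) (Suc x)" using d0 e0 na1 na2 nb nc1 nc2 nb2 by (simp add: T2 sref_apply)
    show "ltimes x (ltimes (Suc x) (ltimes x w)) = ltimes (Suc x) (ltimes x (ltimes (Suc x) w))"
      by (simp add: L3 T3 fun_eq_iff braid_pt)
  qed
qed


lemma braid_adj:
  assumes w: "w \<in> Istar n" and x: "1 \<le> x" "Suc x < n"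
    and d0: "w (Suc x) < w x" and e0: "w (Suc (Suc x)) < w (Suc x)"
    and ne: "w x \<noteq> Suc (Suc x)"
  shows "linked n w x (Suc x)"
proof -
  have iv: "invol w" using Istar_invol[OF w] .
  show ?thesis
  proof (cases "w x = Suc x")
    case True
    have "w (Suc x) = x" using involD[OF iv, of x] True by simp
    then show ?thesis using braid_MCC[OF w x True] e0 by simp
  next
    case F1: False
    show ?thesis
    proof (cases "w (Suc x) = Suc (Suc x)")
      case True
      then show ?thesis using braid_CCM[OF w x True] d0 by simp
    next
      case False
      show ?thesis by (rule braid_CCC[OF w x d0 e0 F1 ne False])
    qed
  qed
qed

lemma adj_E:
  assumes w: "w \<in> Istar n" and x: "1 \<le> x" "Suc x < n"
    and d0: "w (Suc x) < w x" and e0: "w (Suc (Suc x)) < w (Suc x)"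
    and E: "w x = Suc (Suc x)" and SF: "SFw n w"
  shows "linked n w x (Suc x)"
proof -
  have iv: "invol w" using Istar_invol[OF w] .
  have x': "x < n" "1 \<le> Suc x" using x by auto
  have c: "w (Suc (Suc x)) = x" using involD[OF iv, of x] E by simp
  have b: "w (Suc x) = Suc x" using d0 e0 E c by simp
  have out: "w y \<noteq> x \<and> w y \<noteq> Suc x \<and> w y \<noteq> Suc (Suc x)" if "y \<noteq> x" "y \<noteq> Suc x" "y \<noteq> Suc (Suc x)" for y
    using that involD[OF iv, of y] E b c by metis
  have nM1: "\<not> Mc x w" using E by (simp add: Mc_def)
  have L1: "ltimes x w = sref x \<circ> w \<circ> sref x" using lt_C[OF iv nM1] .
  have iv1: "invol (ltimes x w)" using Istar_invol[OF lt_Istar[OF w x(1) x'(1)]] .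
  have M2: "Mc (Suc x) (ltimes x w)" using E by (simp add: L1 Mc_def sref_apply)
  have L2: "ltimes (Suc x) (ltimes x w) = sref (Suc x) \<circ> (sref x \<circ> w \<circ> sref x)" using lt_M[OF iv1 M2] L1 by simp
  have nMt: "\<not> Mc (Suc x) w" using b c by (simp add: Mc_def)
  have T1: "ltimes (Suc x) w = sref (Suc x) \<circ> w \<circ> sref (Suc x)" using lt_C[OF iv nMt] .
  have ivt1: "invol (ltimes (Suc x) w)" using Istar_invol[OF lt_Istar[OF w x'(2) x(2)]] .
  have Mt2: "Mc x (ltimes (Suc x) w)" using E by (simp add: T1 Mc_def sref_apply)
  have T2: "ltimes x (ltimes (Suc x) w) = sref x \<circ> (sref (Suc x) \<circ> w \<circ> sref (Suc x))" using lt_M[OF ivt1 Mt2] T1 by simp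
  define v where "v = ltimes (Suc x) (ltimes x w)"
  have vval: "v y = (if y = x \<or> y = Suc x \<or> y = Suc (Suc x) then y else w y)" for y
  proof (cases "y = x \<or> y = Suc x \<or> y = Suc (Suc x)")
    case True then show ?thesis using E b c by (auto simp: v_def L2 sref_apply)
  next
    case False then show ?thesis using out[of y] by (auto simp: v_def L2 sref_apply)
  qed
  have tv: "ltimes x (ltimes (Suc x) w) = v"
  proof
    fix y show "ltimes x (ltimes (Suc x) w) y = v y"
    proof (cases "y = x \<or> y = Suc x \<or> y = Suc (Suc x)")
      case True then show ?thesis using E b c by (auto simp: vval T2 sref_apply)
    next
      case False then show ?thesis using out[of y] by (auto simp: vval T2 sref_apply)
    qed
  qed
  have v: "v \<in> Istar n" unfolding v_def using lt_Istar[OF lt_Istar[OF w x(1) x'(1)] x'(2) x(2)] .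
  have dA: "ltimes x w (Suc (Suc x)) < ltimes x w (Suc x)" using E b c by (simp add: L1 sref_apply)
  have dB: "ltimes (Suc x) w (Suc x) < ltimes (Suc x) w x" using E b c by (simp add: T1 sref_apply)
  have wordA: "reduced_Iexpr n (x # Suc x # c) w" if "reduced_Iexpr n c v" for c
  proof -
    have "reduced_Iexpr n (Suc x # c) (ltimes x w)"
      using red_cons[OF lt_Istar[OF w x(1) x'(1)] x'(2) x(2) dA] that v_def by simp
    then show ?thesis using red_cons[OF w x(1) x'(1) d0] by simp
  qed
  have wordB: "reduced_Iexpr n (Suc x # x # c) w" if "reduced_Iexpr n c v" for c
  proof -
    have "reduced_Iexpr n (x # c) (ltimes (Suc x) w)"
      using red_cons[OF lt_Istar[OF w x'(2) x(2)] x(1) x'(1) dB] that tv by simp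
    then show ?thesis using red_cons[OF w x'(2) x(2) e0] by simp
  qed
  have linkTr: "linked n w i j" if "linked n w i k" "linked n w k j" for i j k
    using link_trans[OF SF that] .
  show ?thesis
  proof (cases "v = id")
    case True
    have r0: "reduced_Iexpr n [] v" using red_iff[OF v] True Q_id by simp
    have rA: "reduced_Iexpr n [x, Suc x] w" using wordA[OF r0] .
    have rB: "reduced_Iexpr n [Suc x, x] w" using wordB[OF r0] .
    have e1: "expr_val [x, Suc x] = w" "expr_val [Suc x, x] = w" using rA rB by (auto simp: reduced_Iexpr_def is_Iexpr_def simp del: expr_val_Cons)
    have C: "\<exists>a k. 1 \<le> k \<and> k + 1 < n \<and>
        (([x, Suc x] = a @ [k, k+1] \<and> [Suc x, x] = a @ [k+1, k]) \<or>
         ([x, Suc x] = a @ [k+1, k] \<and> [Suc x, x] = a @ [k, k+1]))"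
      using x by (intro exI[of _ "[]"] exI[of _ x]) auto
    have "braid_step n [x, Suc x] [Suc x, x]"
      unfolding braid_step_def using C rA rB e1 by auto
    then have "conn n w [x, Suc x] [Suc x, x]" using conn_step rA rB by blast
    then show ?thesis unfolding linked_def using rA rB by blast
  next
    case False
    obtain d where d: "1 \<le> d" "d < n" "v (Suc d) < v d"
      using perm_desc[OF Istar_perm[OF v] False] by blast
    have dx: "d \<noteq> x" "d \<noteq> Suc x" using d(3) vval[of x] vval[of "Suc x"] vval[of "Suc (Suc x)"] by auto
    consider (lo) "Suc d < x" | (xm) "Suc d = x" | (x2) "d = Suc (Suc x)" | (hi) "Suc (Suc x) < d"
      using dx by linarith
    then show ?thesis
    proof cases
      case lo
      have dw: "w (Suc d) < w d" using d(3) vval[of d] vval[of "Suc d"] lo by (auto split: if_splits)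
      have nn: "\<not> (w x = Suc d \<and> w (Suc x) = d)" using E lo by simp
      have l1: "linked n w d x" using far_link[OF w d(1) lo x'(1) dw d0 nn] .
      have l2: "linked n w d (Suc x)" using far_link[OF w d(1) _ x(2) dw e0] lo b by simp
      show ?thesis using linkTr[OF link_sym[OF l1] l2] .
    next
      case xm
      have wd: "w d \<noteq> Suc x" "w d \<noteq> Suc (Suc x)" "w d \<noteq> x" using out[of d] xm by auto
      have dw: "w (Suc d) < w d" using d(3) vval[of d] vval[of "Suc d"] xm wd E by (auto split: if_splits)
      have l1: "linked n w d x" using braid_adj[OF w d(1) _ dw] xm d0 wd x' by simp
      have l2: "linked n w d (Suc x)" using far_link[OF w d(1) _ x(2) dw e0] xm b by simp
      show ?thesis using linkTr[OF link_sym[OF l1] l2] .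
    next
      case x2
      have w3: "w (Suc (Suc (Suc x))) \<noteq> x" "w (Suc (Suc (Suc x))) \<noteq> Suc x" using out[of "Suc (Suc (Suc x))"] by auto
      have dw: "w (Suc (Suc (Suc x))) < w (Suc (Suc x))"
        using d(3) vval[of "Suc (Suc x)"] vval[of "Suc (Suc (Suc x))"] x2 c w3 by (auto split: if_splits)
      have l1: "linked n w (Suc x) (Suc (Suc x))" using braid_adj[OF w x'(2) _ e0 dw] x2 d(2) b by simp
      have l2: "linked n w x (Suc (Suc x))" using far_link[OF w x(1) _ _ d0 dw] x2 d(2) c by simp
      show ?thesis using linkTr[OF l2 link_sym[OF l1]] .
    next
      case hi
      have dw: "w (Suc d) < w d" using d(3) vval[of d] vval[of "Suc d"] hi by (auto split: if_splits)
      have wd: "w d \<noteq> Suc x" "w d \<noteq> Suc (Suc x)" using out[of d] hi by auto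
      have l1: "linked n w x d" using far_link[OF w x(1) _ d(2) d0 dw] hi wd by simp
      have l2: "linked n w (Suc x) d" using far_link[OF w x'(2) _ d(2) e0 dw] hi wd by simp
      show ?thesis using linkTr[OF l1 link_sym[OF l2]] .
    qed
  qed
qed


lemma all_linked:
  assumes w: "w \<in> Istar n" and SF: "SFw n w"
  shows "1 \<le> i \<Longrightarrow> i < j \<Longrightarrow> j < n \<Longrightarrow> w (Suc i) < w i \<Longrightarrow> w (Suc j) < w j \<Longrightarrow> linked n w i j"
proof (induction "j - i" arbitrary: i j rule: less_induct)
  case less
  have iv: "invol w" using Istar_invol[OF w] .
  consider (adj) "j = Suc i" | (far) "Suc i < j" using less.prems by linarith
  then show ?case
  proof cases
    case adj
    have x: "1 \<le> i" "Suc i < n" using less.prems adj by auto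
    show ?thesis
    proof (cases "w i = Suc (Suc i)")
      case True
      then show ?thesis using adj_E[OF w x _ _ True SF] less.prems adj by simp
    next
      case False
      then show ?thesis using braid_adj[OF w x _ _ False] less.prems adj by simp
    qed
  next
    case far
    show ?thesis
    proof (cases "w j = Suc i \<and> w (Suc j) = i")
      case True
      have wi: "w (Suc i) = j" using involD[OF iv, of j] True by simp
      obtain k where k: "Suc i \<le> k" "k < j" "w (Suc k) < w k"
        using desc_between[of "Suc i" j w] far True wi by auto
      have l1: "linked n w i k" using less.hyps[of k i] less.prems k by simp
      have l2: "linked n w k j" using less.hyps[of j k] less.prems k by simp
      show ?thesis using link_trans[OF SF l1 l2] .
    next
      case False
      then show ?thesis using far_link[OF w less.prems(1) far less.prems(3,4,5)] by simp
    qed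
  qed
qed

lemma main_conn:
  "\<forall>w xs ys. length xs = m \<longrightarrow> reduced_Iexpr n xs w \<longrightarrow> reduced_Iexpr n ys w \<longrightarrow> conn n w xs ys"
proof (induction m)
  case 0
  show ?case
  proof (intro allI impI)
    fix w xs ys assume h: "length xs = 0" "reduced_Iexpr n xs w" "reduced_Iexpr n ys w"
    then have "length ys = 0" using red_len by metis
    then show "conn n w xs ys" using h conn_refl by simp
  qed
next
  case (Suc m)
  show ?case
  proof (intro allI impI)
    fix w xs ys assume len: "length xs = Suc m" and rx: "reduced_Iexpr n xs w" and ry: "reduced_Iexpr n ys w"
    have w: "w \<in> Istar n" using red_Istar[OF rx] .
    have SF: "SFw n w" unfolding SFw_def
    proof (intro allI impI)
      fix k p1 p2 assume r1: "reduced_Iexpr n (k # p1) w" and r2: "reduced_Iexpr n (k # p2) w"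
      have q1: "reduced_Iexpr n p1 (ltimes k w)" using red_cons_D[OF r1] by blast
      have q2: "reduced_Iexpr n p2 (ltimes k w)" using red_cons_D[OF r2] by blast
      have "length p1 = m" using red_len[OF rx r1] len by simp
      then have "conn n (ltimes k w) p1 p2" using Suc.IH q1 q2 by blast
      from conn_prefix[OF this q1, of "[k]" w] r1 show "conn n w (k # p1) (k # p2)" by simp
    qed
    obtain i p where xs: "xs = i # p" using len by (cases xs) auto
    have "length ys = Suc m" using red_len[OF rx ry] len by simp
    then obtain j q where ys: "ys = j # q" by (cases ys) auto
    have di: "1 \<le> i" "i < n" "w (Suc i) < w i" using red_cons_D[of n i p w] rx xs by auto
    have dj: "1 \<le> j" "j < n" "w (Suc j) < w j" using red_cons_D[of n j q w] ry ys by auto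
    have "linked n w i j"
    proof (cases "i = j")
      case True then show ?thesis using link_refl[OF w di] by simp
    next
      case False
      then consider "i < j" | "j < i" by linarith
      then show ?thesis
      proof cases
        case 1 show ?thesis using all_linked[OF w SF di(1) 1 dj(2) di(3) dj(3)] .
      next
        case 2 show ?thesis using link_sym[OF all_linked[OF w SF dj(1) 2 di(2) dj(3) di(3)]] .
      qed
    qed
    then obtain p' q' where l: "reduced_Iexpr n (i # p') w" "reduced_Iexpr n (j # q') w" "conn n w (i # p') (j # q')"
      unfolding linked_def by blast
    have "conn n w xs (i # p')" using SF rx xs l(1) by (simp add: SFw_def)
    moreover have "conn n w (j # q') ys" using SF ry ys l(2) by (simp add: SFw_def)
    ultimately show "conn n w xs ys" using l(3) conn_trans by blast
  qed
qed

theorem theorem3p1: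
  fixes n :: nat and w :: "nat \<Rightarrow> nat" and xs ys :: "nat list"
  assumes "w \<in> Istar n"
    and "reduced_Iexpr n xs w"
    and "reduced_Iexpr n ys w"
  shows "(\<lambda>u v. braid_step n u v \<and> reduced_Iexpr n v w)\<^sup>*\<^sup>* xs ys"
  using conn_goal main_conn assms by blast

end
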